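(* Let $\tilde q=q^2$. For all integers $v\geq 1$ and $L\geq 0$, \[ \sum_{n_1,\ldots,n_v\geq 0} \frac{\tilde q^{\sum_{i=1}^v N_i(N_i+1)+n_v}}{(\tilde q)_{n_1}\cdots(\tilde q)_{n_{v-1}}(\tilde q)_{2n_v+1}}\,\frac{(q^3;q^6)_{n_v}}{(q;q^2)_{n_v}}\,\frac{(\tilde q)_{2L+1}}{(\tilde q)_{L-N_1}} =\sum_{j=-\infty}^{\infty} (-1)^j q^{(2v+1)j^2+2vj-1}\left(\frac{j}{3}\right){2L+1 \brack L-j}_{\tilde q}, \] where $N_i=n_i+n_{i+1}+\cdots+n_v$ for $i=1,\ldots,v$ (for $v=1$ the product $(\tilde q)_{n_1}\cdots(\tilde q)_{n_{v-1}}$ is empty).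
   Context: For a variable $a$ and integer $n\ge 0$, $(a;q)_n=(1-a)(1-aq)\cdots(1-aq^{n-1})$, and $(\tilde q)_n=(\tilde q;\tilde q)_n$; by convention $1/(\tilde q)_n=0$ for negative integers $n$. The $q$-binomial coefficient in base $\tilde q$ is ${A \brack B}_{\tilde q}=\frac{(\tilde q;\tilde q)_A}{(\tilde q;\tilde q)_B(\tilde q;\tilde q)_{A-B}}$ if $0\le B\le A$ are integers, and $0$ otherwise. $\left(\frac{j}{3}\right)$ is the Legendre symbol modulo 3: it equals $1$ if $j\equiv 1 \pmod 3$, $-1$ if $j\equiv -1\pmod 3$, and $0$ if $3\mid j$. *)

theory Defs
  imports "HOL-Analysis.Analysis" "HOL-Number_Theory.Number_Theory"
begin

definition qpoch :: "complex \<Rightarrow> complex \<Rightarrow> nat \<Rightarrow> complex" where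
  "qpoch a q n = (\<Prod>k<n. (1 - a * q ^ k))"

definition inv_qfact :: "complex \<Rightarrow> int \<Rightarrow> complex" where
  "inv_qfact tq m = (if m < 0 then 0 else inverse (qpoch tq tq (nat m)))"

definition qbinom :: "complex \<Rightarrow> int \<Rightarrow> int \<Rightarrow> complex" where
  "qbinom tq A B = (if 0 \<le> B \<and> B \<le> A
      then qpoch tq tq (nat A) / (qpoch tq tq (nat B) * qpoch tq tq (nat (A - B)))
      else 0)"

end

theory Submission
  imports Defs
begin

lemma qpoch_0[simp]: "qpoch a b 0 = 1" by (simp add: qpoch_def)
lemma qpoch_Suc: "qpoch a b (Suc n) = qpoch a b n * (1 - a * b ^ n)"
  by (simp add: qpoch_def lessThan_Suc mult.commute)

lemma qpoch_nz:
  assumes "norm a < 1" "norm b \<le> 1"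
  shows "qpoch a b n \<noteq> 0"
proof -
  have "1 - a * b ^ k \<noteq> 0" for k
  proof
    assume "1 - a * b ^ k = 0"
    hence "a * b ^ k = 1" by simp
    hence "norm (a * b ^ k) = 1" by simp
    moreover have "norm (a * b ^ k) < 1"
    proof -
      have "norm (b ^ k) \<le> 1" using assms(2) by (simp add: norm_power power_le_one)
      hence "norm a * norm (b ^ k) \<le> norm a" by (simp add: mult_left_le)
      thus ?thesis using assms(1) by (simp add: norm_mult)
    qed
    ultimately show False by simp
  qed
  thus ?thesis by (simp add: qpoch_def)
qed

lemma qpoch_add: "qpoch a b (m + n) = qpoch a b m * qpoch (a * b ^ m) b n"
  by (induction n) (simp_all add: qpoch_Suc power_add mult.assoc)

lemma qbinom_nat:
  "k \<le> n \<Longrightarrow> qbinom p (int n) (int k) = qpoch p p n / (qpoch p p k * qpoch p p (n - k))"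
  by (simp add: qbinom_def nat_diff_distrib)

lemma qbinom_out: "k < 0 \<or> k > n \<Longrightarrow> qbinom p n k = 0"
  by (auto simp: qbinom_def)

lemma qbinom_0: "norm p < 1 \<Longrightarrow> n \<ge> 0 \<Longrightarrow> qbinom p n 0 = 1"
  using qpoch_nz[of p p] by (simp add: qbinom_def)

lemma qbinom_diag: "norm p < 1 \<Longrightarrow> n \<ge> 0 \<Longrightarrow> qbinom p n n = 1"
  using qpoch_nz[of p p] by (simp add: qbinom_def)

lemma pascal_core:
  assumes "norm p < 1"
  shows "qbinom p (int (m + Suc k' + 1)) (int (Suc k')) =
     qbinom p (int (m + Suc k')) (int (Suc k')) + p ^ (m + 1) * qbinom p (int (m + Suc k')) (int k')"
proof -
  define X where "X = qpoch p p (m + k' + 1)"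
  define A where "A = qpoch p p k'"
  define B where "B = qpoch p p m"
  define u where "u = p ^ (k' + 1)"
  define w where "w = p ^ (m + 1)"
  have nz: "qpoch p p n \<noteq> 0" for n using assms by (intro qpoch_nz) auto
  have u1: "1 - u \<noteq> 0" using nz[of "Suc k'"] unfolding u_def by (auto simp: qpoch_Suc)
  have w1: "1 - w \<noteq> 0" using nz[of "Suc m"] unfolding w_def by (auto simp: qpoch_Suc)
  have e1: "qpoch p p (Suc (Suc (m + k'))) = X * (1 - u * w)"
    by (simp add: X_def u_def w_def qpoch_Suc power_add[symmetric] add.commute add.left_commute)
  have e2: "qpoch p p (Suc k') = A * (1 - u)" by (simp add: A_def u_def qpoch_Suc)
  have e3: "qpoch p p (Suc m) = B * (1 - w)" by (simp add: B_def w_def qpoch_Suc)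
  have e4: "qpoch p p (Suc (m + k')) = X" by (simp add: X_def)
  have f1: "qbinom p (int (m + Suc k' + 1)) (int (Suc k')) = X * (1 - u * w) / (A * (1 - u) * (B * (1 - w)))"
    by (subst qbinom_nat) (simp_all add: e1 e2 e3[symmetric] Suc_diff_le)
  have f2: "qbinom p (int (m + Suc k')) (int (Suc k')) = X / (A * (1 - u) * B)"
    by (subst qbinom_nat) (simp_all add: e2 e4 B_def)
  have f3: "qbinom p (int (m + Suc k')) (int k') = X / (A * (B * (1 - w)))"
    by (subst qbinom_nat) (simp_all add: e3[symmetric] e4 A_def Suc_diff_le)
  have "A \<noteq> 0" "B \<noteq> 0" using nz by (auto simp: A_def B_def)
  hence "X * (1 - u * w) / (A * (1 - u) * (B * (1 - w))) = X / (A * (1 - u) * B) + w * (X / (A * (B * (1 - w))))"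
    using u1 w1 by (simp add: divide_simps) (simp add: algebra_simps)
  thus ?thesis unfolding f1 f2 f3 w_def .
qed

lemma pascal_core1:
  assumes "norm p < 1"
  shows "qbinom p (int (m + Suc k' + 1)) (int (Suc k')) =
     p ^ (k' + 1) * qbinom p (int (m + Suc k')) (int (Suc k')) + qbinom p (int (m + Suc k')) (int k')"
proof -
  define X where "X = qpoch p p (m + k' + 1)"
  define A where "A = qpoch p p k'"
  define B where "B = qpoch p p m"
  define u where "u = p ^ (k' + 1)"
  define w where "w = p ^ (m + 1)"
  have nz: "qpoch p p n \<noteq> 0" for n using assms by (intro qpoch_nz) auto
  have u1: "1 - u \<noteq> 0" using nz[of "Suc k'"] unfolding u_def by (auto simp: qpoch_Suc)
  have w1: "1 - w \<noteq> 0" using nz[of "Suc m"] unfolding w_def by (auto simp: qpoch_Suc)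
  have e1: "qpoch p p (Suc (Suc (m + k'))) = X * (1 - u * w)"
    by (simp add: X_def u_def w_def qpoch_Suc power_add[symmetric] add.commute add.left_commute)
  have e2: "qpoch p p (Suc k') = A * (1 - u)" by (simp add: A_def u_def qpoch_Suc)
  have e3: "qpoch p p (Suc m) = B * (1 - w)" by (simp add: B_def w_def qpoch_Suc)
  have e4: "qpoch p p (Suc (m + k')) = X" by (simp add: X_def)
  have f1: "qbinom p (int (m + Suc k' + 1)) (int (Suc k')) = X * (1 - u * w) / (A * (1 - u) * (B * (1 - w)))"
    by (subst qbinom_nat) (simp_all add: e1 e2 e3[symmetric] Suc_diff_le)
  have f2: "qbinom p (int (m + Suc k')) (int (Suc k')) = X / (A * (1 - u) * B)"
    by (subst qbinom_nat) (simp_all add: e2 e4 B_def)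
  have f3: "qbinom p (int (m + Suc k')) (int k') = X / (A * (B * (1 - w)))"
    by (subst qbinom_nat) (simp_all add: e3[symmetric] e4 A_def Suc_diff_le)
  have "A \<noteq> 0" "B \<noteq> 0" using nz by (auto simp: A_def B_def)
  hence "X * (1 - u * w) / (A * (1 - u) * (B * (1 - w))) = u * (X / (A * (1 - u) * B)) + X / (A * (B * (1 - w)))"
    using u1 w1 by (simp add: divide_simps) (simp add: algebra_simps)
  thus ?thesis unfolding f1 f2 f3 u_def .
qed


lemma pascal2:
  assumes "norm p < 1" "n \<ge> 0"
  shows "qbinom p (n + 1) k = qbinom p n k + p ^ nat (n + 1 - k) * qbinom p n (k - 1)"
proof -
  consider "k < 0" | "k = 0" | "k > n + 1" | "k = n + 1" | "0 < k \<and> k \<le> n" by linarith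
  thus ?thesis
  proof cases
    case 1 thus ?thesis by (simp add: qbinom_out)
  next
    case 2 thus ?thesis using assms by (simp add: qbinom_out qbinom_0)
  next
    case 3 thus ?thesis by (simp add: qbinom_out)
  next
    case 4 thus ?thesis using assms by (simp add: qbinom_out qbinom_diag)
  next
    case 5
    define k' where "k' = nat k - 1"
    have k': "k = int (Suc k')" using 5 unfolding k'_def by simp
    define m where "m = nat (n - k)"
    have m: "n = int (m + Suc k')" using 5 k' unfolding m_def by simp
    have "nat (n + 1 - k) = m + 1" using m k' by simp
    thus ?thesis using pascal_core[OF assms(1), of m k'] m k' by (simp add: add_ac)
  qed
qed

lemma pascal1:
  assumes "norm p < 1" "n \<ge> 0"
  shows "qbinom p (n + 1) k = p ^ nat k * qbinom p n k + qbinom p n (k - 1)"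
proof -
  consider "k < 0" | "k = 0" | "k > n + 1" | "k = n + 1" | "0 < k \<and> k \<le> n" by linarith
  thus ?thesis
  proof cases
    case 1 thus ?thesis by (simp add: qbinom_out)
  next
    case 2 thus ?thesis using assms by (simp add: qbinom_out qbinom_0)
  next
    case 3 thus ?thesis by (simp add: qbinom_out)
  next
    case 4 thus ?thesis using assms by (simp add: qbinom_out qbinom_diag)
  next
    case 5
    define k' where "k' = nat k - 1"
    have k': "k = int (Suc k')" using 5 unfolding k'_def by simp
    define m where "m = nat (n - k)"
    have m: "n = int (m + Suc k')" using 5 k' unfolding m_def by simp
    have "nat k = Suc k'" using k' by simp
    thus ?thesis using pascal_core1[OF assms(1), of m k'] m k' by (simp add: add_ac)
  qed
qed

lemma sum_shift_int: "(\<Sum>j\<in>{m+1..n+1}. f j) = (\<Sum>i\<in>{m..n}. f (i + 1 :: int))"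
  by (rule sum.reindex_bij_witness[where i="\<lambda>i. i + 1" and j="\<lambda>j. j - 1"]) auto

lemma sum_neg_int: "(\<Sum>j\<in>{-n..-m}. f j) = (\<Sum>i\<in>{m..n}. f (- i :: int))"
  by (rule sum.reindex_bij_witness[of _ "\<lambda>j. - j" "\<lambda>i. - i"]) auto

lemma qbinom_sym: "0 \<le> k \<Longrightarrow> k \<le> n \<Longrightarrow> qbinom p n (n - k) = qbinom p n k"
  by (simp add: qbinom_def mult.commute)

definition jtpL :: "complex \<Rightarrow> complex \<Rightarrow> nat \<Rightarrow> nat \<Rightarrow> complex" where
  "jtpL q z a b = (\<Sum>j\<in>{- int b..int a}. z powi j * q ^ nat (j^2) * qbinom (q^2) (int (a + b)) (int b + j))"

definition jtpR :: "complex \<Rightarrow> complex \<Rightarrow> nat \<Rightarrow> nat \<Rightarrow> complex" where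
  "jtpR q z a b = (\<Prod>k<a. 1 + z * q ^ (2*k+1)) * (\<Prod>k<b. 1 + q ^ (2*k+1) / z)"

lemma jtp_step:
  assumes q: "norm q < 1" and z: "z \<noteq> 0"
  shows "jtpL q z (Suc a) b = (1 + z * q ^ (2*a+1)) * jtpL q z a b"
proof -
  have p: "norm (q^2) < 1" using q by (simp add: norm_power power_less_one_iff abs_square_less_1)
  define n where "n = int (a + b)"
  have n0: "n \<ge> 0" by (simp add: n_def)
  have nS: "int (Suc a + b) = n + 1" by (simp add: n_def)
  have sa: "int (Suc a) = int a + 1" by simp
  define f where "f j = z powi j * q ^ nat (j^2) * qbinom (q^2) n (int b + j)" for j
  define g where "g j = z powi j * q ^ nat (j^2) * ((q^2) ^ nat (n + 1 - (int b + j)) * qbinom (q^2) n (int b + j - 1))" for j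
  have "jtpL q z (Suc a) b = (\<Sum>j\<in>{- int b..int a + 1}. f j + g j)"
    unfolding jtpL_def nS f_def g_def sa
    by (intro sum.cong refl, subst pascal2[OF p n0]) (simp add: algebra_simps)
  also have "\<dots> = (\<Sum>j\<in>{- int b..int a + 1}. f j) + (\<Sum>j\<in>{- int b..int a + 1}. g j)"
    by (simp add: sum.distrib)
  also have "(\<Sum>j\<in>{- int b..int a + 1}. f j) = jtpL q z a b"
  proof -
    have "(\<Sum>j\<in>{- int b..int a + 1}. f j) = f (int a + 1) + (\<Sum>j\<in>{- int b..int a}. f j)"
    proof -
      have "{- int b..int a + 1} = insert (int a + 1) {- int b..int a}" by auto
      thus ?thesis by simp
    qed
    moreover have "f (int a + 1) = 0" unfolding f_def n_def by (simp add: qbinom_out)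
    ultimately show ?thesis by (simp add: jtpL_def f_def n_def)
  qed
  also have "(\<Sum>j\<in>{- int b..int a + 1}. g j) = (\<Sum>j\<in>{- int b + 1..int a + 1}. g j)"
  proof -
    have "{- int b..int a + 1} = insert (- int b) {- int b + 1..int a + 1}" by auto
    moreover have "g (- int b) = 0" unfolding g_def by (simp add: qbinom_out)
    ultimately show ?thesis by simp
  qed
  also have "\<dots> = (\<Sum>i\<in>{- int b..int a}. g (i + 1))" by (rule sum_shift_int)
  also have "\<dots> = (\<Sum>i\<in>{- int b..int a}. z * q ^ (2*a+1) * f i)"
  proof (intro sum.cong refl)
    fix i assume i: "i \<in> {- int b..int a}"
    have e1: "z powi (i + 1) = z * z powi i" using z by (simp add: power_int_add)
    have e2: "nat (n + 1 - (int b + (i + 1))) = nat (int a - i)" by (simp add: n_def)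
    have e3: "q ^ nat ((i + 1)^2) * (q^2) ^ nat (int a - i) = q ^ (2*a+1) * q ^ nat (i^2)"
    proof -
      have "nat ((i + 1)^2) + 2 * nat (int a - i) = nat ((i+1)^2 + 2 * (int a - i))"
        using i by (simp add: nat_add_distrib nat_mult_distrib)
      also have "(i+1)^2 + 2 * (int a - i) = int (2*a+1) + i^2" by (simp add: power2_eq_square algebra_simps)
      also have "nat (int (2*a+1) + i^2) = (2*a+1) + nat (i^2)" by (simp add: nat_add_distrib)
      finally have "nat ((i + 1)^2) + 2 * nat (int a - i) = (2*a+1) + nat (i^2)" .
      moreover have "q ^ nat ((i + 1)^2) * (q^2) ^ nat (int a - i) = q ^ (nat ((i + 1)^2) + 2 * nat (int a - i))"
        by (simp add: power_add power_mult)
      ultimately show ?thesis by (simp add: power_add)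
    qed
    have e4: "int b + (i + 1) - 1 = int b + i" by simp
    have "g (i + 1) = (z * z powi i) * (q ^ nat ((i + 1)^2) * (q^2) ^ nat (int a - i)) * qbinom (q^2) n (int b + i)"
      unfolding g_def e1 e2 e4 by (simp add: mult_ac)
    also have "\<dots> = z * q ^ (2*a+1) * f i" unfolding e3 f_def by (simp add: mult_ac)
    finally show "g (i + 1) = z * q ^ (2*a+1) * f i" .
  qed
  also have "\<dots> = z * q ^ (2*a+1) * jtpL q z a b"
    by (simp add: jtpL_def f_def n_def sum_distrib_left)
  finally show ?thesis by (simp add: algebra_simps)
qed

lemma norm_q2: "norm q < 1 \<Longrightarrow> norm ((q::complex)^2) < 1"
  by (simp add: norm_power abs_square_less_1)

lemma jtp_a0:
  assumes q: "norm q < 1" and z: "z \<noteq> 0"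
  shows "jtpL q z a 0 = jtpR q z a 0"
proof (induction a)
  case 0
  show ?case using qbinom_0[OF norm_q2[OF q], of 0] by (simp add: jtpL_def jtpR_def)
next
  case (Suc a)
  show ?case using jtp_step[OF q z, of a 0] Suc by (simp add: jtpR_def lessThan_Suc mult_ac)
qed

lemma jtp_0b:
  assumes q: "norm q < 1" and z: "z \<noteq> 0"
  shows "jtpL q z 0 b = jtpR q z 0 b"
proof -
  have "jtpL q z 0 b = (\<Sum>j\<in>{- int b..- 0}. z powi j * q ^ nat (j^2) * qbinom (q^2) (int b) (int b + j))"
    by (simp add: jtpL_def)
  also have "\<dots> = (\<Sum>i\<in>{0..int b}. z powi (-i) * q ^ nat ((-i)^2) * qbinom (q^2) (int b) (int b + - i))"
    by (rule sum_neg_int)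
  also have "\<dots> = (\<Sum>i\<in>{- int 0..int b}. (inverse z) powi i * q ^ nat (i^2) * qbinom (q^2) (int (b + 0)) (int 0 + i))"
    by (intro sum.cong) (auto simp: power_int_minus power_int_inverse qbinom_sym)
  also have "\<dots> = jtpL q (inverse z) b 0" by (simp add: jtpL_def)
  also have "\<dots> = jtpR q (inverse z) b 0" using jtp_a0[OF q] z by simp
  also have "\<dots> = jtpR q z 0 b" by (simp add: jtpR_def field_simps)
  finally show ?thesis .
qed

lemma jtp:
  assumes q: "norm q < 1" and z: "z \<noteq> 0"
  shows "jtpL q z a b = jtpR q z a b"
proof (induction a)
  case 0
  show ?case using jtp_0b[OF q z] .
next
  case (Suc a)
  show ?case using jtp_step[OF q z, of a b] Suc by (simp add: jtpR_def lessThan_Suc mult_ac)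
qed

definition om :: complex where "om = Complex (-1/2) (sqrt 3 / 2)"

lemma om2: "om^2 = Complex (-1/2) (- sqrt 3 / 2)"
  by (simp add: om_def power2_eq_square complex_eq_iff)

lemma om3: "om^3 = 1"
proof -
  have "om^3 = om^2 * om" by (simp add: power3_eq_cube power2_eq_square)
  thus ?thesis by (simp only: om2, simp add: om_def complex_eq_iff)
qed

lemma om_sum: "1 + om + om^2 = 0"
  by (simp only: om2, simp add: om_def complex_eq_iff)

lemma om_nz: "om \<noteq> 0" by (simp add: om_def complex_eq_iff)

lemma om_diff_nz: "om - om^2 \<noteq> 0" by (simp only: om2, simp add: om_def complex_eq_iff)

lemma om_inv: "inverse om = om^2"
  using om3 om_nz by (simp add: field_simps power3_eq_cube power2_eq_square)

lemma om_powi: "om powi j = om ^ nat (j mod 3)"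
proof -
  have "j = 3 * (j div 3) + j mod 3" by simp
  hence "om powi j = om powi (3 * (j div 3)) * om powi (j mod 3)"
    using om_nz by (metis power_int_add)
  also have "om powi (3 * (j div 3)) = (om ^ 3) powi (j div 3)"
    by (simp add: power_int_mult)
  also have "om powi (j mod 3) = om ^ nat (j mod 3)"
    by (simp add: power_int_def)
  finally show ?thesis by (simp add: om3)
qed

definition chi :: "int \<Rightarrow> int" where
  "chi j = (if j mod 3 = 0 then 0 else if j mod 3 = 1 then 1 else -1)"

lemma Legendre3: "Legendre j 3 = chi j"
proof -
  have sq: "y^2 mod 3 \<in> {0, 1}" for y :: int
  proof -
    have "y mod 3 \<in> {0,1,2}" by auto
    moreover have "y^2 mod 3 = (y mod 3)^2 mod 3" by (simp add: power_mod)
    ultimately show ?thesis by auto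
  qed
  have "j mod 3 \<in> {0,1,2}" by auto
  moreover
  { assume "j mod 3 = 1"
    hence "QuadRes 3 j" unfolding QuadRes_def cong_def by (intro exI[of _ 1]) simp }
  moreover
  { assume h: "j mod 3 = 2"
    have "\<not> QuadRes 3 j"
    proof
      assume "QuadRes 3 j"
      then obtain y where "[y^2 = j] (mod 3)" unfolding QuadRes_def by blast
      hence "y^2 mod 3 = 2" using h by (simp add: cong_def)
      thus False using sq[of y] by simp
    qed }
  ultimately show ?thesis unfolding Legendre_def chi_def cong_def by auto
qed

lemma om_char: "(- om) powi j - (- (om^2)) powi j = (-1) powi j * of_int (chi j) * (om - om^2)"
proof -
  have a: "(- om) powi j = (-1) powi j * om powi j"
    by (metis mult_minus1 power_int_mult_distrib)
  have b: "(- (om^2)) powi j = (-1) powi j * om powi (2 * j)"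
    by (metis mult_minus1 power_int_mult_distrib power_int_mult power_int_of_nat of_nat_numeral mult.commute)
  have c: "om powi j - om powi (2*j) = of_int (chi j) * (om - om^2)"
  proof -
    have "j mod 3 \<in> {0,1,2}" by auto
    moreover have "(2*j) mod 3 = (2 * (j mod 3)) mod 3" by (simp add: mod_mult_right_eq)
    ultimately show ?thesis unfolding om_powi chi_def
      using om3 by (auto simp: power2_eq_square power3_eq_cube)
  qed
  have "(-1) powi j * om powi j - (-1) powi j * om powi (2 * j) = (-1) powi j * (om powi j - om powi (2*j))"
    by (simp add: algebra_simps)
  thus ?thesis unfolding a b c by simp
qed

lemma om_fac: "(1 - om * x) * (1 - om^2 * x) = 1 + x + x^2"
proof -
  have "(1 - om * x) * (1 - om^2 * x) = 1 - (om + om^2) * x + om^3 * x^2"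
    by (simp add: algebra_simps power2_eq_square power3_eq_cube)
  also have "om + om^2 = -1" using om_sum by (simp add: add_eq_0_iff algebra_simps)
  finally show ?thesis by (simp add: om3)
qed

lemma om_inv2: "inverse (om^2) = om"
  using om3 om_nz by (simp add: field_simps power3_eq_cube power2_eq_square)

lemma jtpR_om:
  "jtpR q (- om) L (Suc L) = (\<Prod>k<L. 1 + q^(2*k+1) + (q^(2*k+1))^2) * (1 - om^2 * q^(2*L+1))"
  "jtpR q (- (om^2)) L (Suc L) = (\<Prod>k<L. 1 + q^(2*k+1) + (q^(2*k+1))^2) * (1 - om * q^(2*L+1))"
proof -
  have i1: "x / (- om) = - (om^2 * x)" for x
    by (simp add: divide_inverse om_inv mult.commute)
  have i2: "x / (- (om^2)) = - (om * x)" for x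
    by (simp add: divide_inverse om_inv2 mult.commute)
  show "jtpR q (- om) L (Suc L) = (\<Prod>k<L. 1 + q^(2*k+1) + (q^(2*k+1))^2) * (1 - om^2 * q^(2*L+1))"
    unfolding jtpR_def i1 prod.lessThan_Suc
    by (simp add: om_fac[symmetric] prod.distrib mult_ac)
  show "jtpR q (- (om^2)) L (Suc L) = (\<Prod>k<L. 1 + q^(2*k+1) + (q^(2*k+1))^2) * (1 - om * q^(2*L+1))"
    unfolding jtpR_def i2 prod.lessThan_Suc
    by (simp add: om_fac[symmetric] prod.distrib mult_ac)
qed

lemma base_id:
  assumes q: "norm q < 1"
  shows "(\<Sum>j\<in>{- int L - 1..int L}. (-1) powi j * of_int (chi j) * q ^ nat (j^2) * qbinom (q^2) (2 * int L + 1) (int L - j))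
    = q^(2*L+1) * (\<Prod>k<L. 1 + q^(2*k+1) + (q^(2*k+1))^2)"
proof -
  define S where "S = (\<Sum>j\<in>{- int L - 1..int L}. (-1) powi j * of_int (chi j) * q ^ nat (j^2) * qbinom (q^2) (2 * int L + 1) (int L - j))"
  define P where "P = (\<Prod>k<L. 1 + q^(2*k+1) + (q^(2*k+1))^2)"
  have jL: "jtpL q z L (Suc L) = (\<Sum>j\<in>{- int L - 1..int L}. z powi j * q ^ nat (j^2) * qbinom (q^2) (2 * int L + 1) (int L - j))" for z
    unfolding jtpL_def
  proof (intro sum.cong)
    show "{- int (Suc L)..int L} = {- int L - 1..int L}" by simp
  next
    fix j assume j: "j \<in> {- int L - 1..int L}"
    have h: "qbinom (q^2) (2 * int L + 1) ((2 * int L + 1) - (int L - j)) = qbinom (q^2) (2 * int L + 1) (int L - j)"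
      using j by (intro qbinom_sym) auto
    have e2: "int (Suc L) + j = (2 * int L + 1) - (int L - j)" by simp
    have e1: "int (L + Suc L) = 2 * int L + 1" by simp
    show "z powi j * q ^ nat (j^2) * qbinom (q^2) (int (L + Suc L)) (int (Suc L) + j) =
      z powi j * q ^ nat (j^2) * qbinom (q^2) (2 * int L + 1) (int L - j)" unfolding e1 e2 h ..
  qed
  have "jtpL q (- om) L (Suc L) - jtpL q (- (om^2)) L (Suc L) = (om - om^2) * S"
    unfolding jL S_def sum_distrib_left sum_subtractf[symmetric]
    by (intro sum.cong refl) (simp add: left_diff_distrib[symmetric] om_char mult_ac)
  moreover have "jtpL q (- om) L (Suc L) - jtpL q (- (om^2)) L (Suc L) = (om - om^2) * (q^(2*L+1) * P)"
  proof -
    have nz1: "- om \<noteq> 0" "- (om^2) \<noteq> 0" using om_nz by auto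
    show ?thesis unfolding jtp[OF q nz1(1)] jtp[OF q nz1(2)] jtpR_om P_def by (simp add: algebra_simps)
  qed
  ultimately have "(om - om^2) * S = (om - om^2) * (q^(2*L+1) * P)" by metis
  hence "S = q^(2*L+1) * P" using om_diff_nz by (metis mult_left_cancel)
  thus ?thesis unfolding S_def P_def .
qed

lemma qpoch_Suc_front: "qpoch a b (Suc n) = (1 - a) * qpoch (a * b) b n"
  using qpoch_add[of a b 1 n] by (simp add: qpoch_Suc)

definition Tsum :: "complex \<Rightarrow> nat \<Rightarrow> complex \<Rightarrow> complex" where
  "Tsum p n a = (\<Sum>k\<in>{0..n}. qbinom p (int n) (int k) * a ^ k * p ^ (k^2) * qpoch (a * p ^ (k+1)) p (n - k))"

lemma Tsum_step:
  assumes p: "norm p < 1"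
  shows "Tsum p (Suc n) a = Tsum p n (a * p)"
proof -
  define A where "A k = p ^ k * qbinom p (int n) (int k) * a ^ k * p ^ (k^2) * qpoch (a * p ^ (k+1)) p (Suc n - k)" for k
  define B where "B k = qbinom p (int n) (int k - 1) * a ^ k * p ^ (k^2) * qpoch (a * p ^ (k+1)) p (Suc n - k)" for k
  have pas: "qbinom p (int (Suc n)) (int k) = p ^ k * qbinom p (int n) (int k) + qbinom p (int n) (int k - 1)" for k
    using pascal1[OF p, of "int n" "int k"] by (simp add: add.commute)
  define C where "C k = qbinom p (int n) (int k) * (a * p) ^ k * p ^ (k^2) * qpoch (a * p * p ^ (k+1)) p (n - k)" for k
  have "Tsum p (Suc n) a = (\<Sum>k\<in>{0..Suc n}. A k + B k)"
    unfolding Tsum_def A_def B_def pas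
    by (intro sum.cong refl) (simp add: algebra_simps)
  also have "\<dots> = (\<Sum>k\<in>{0..Suc n}. A k) + (\<Sum>k\<in>{0..Suc n}. B k)" by (simp add: sum.distrib)
  also have "(\<Sum>k\<in>{0..Suc n}. A k) = (\<Sum>k\<in>{0..n}. C k * (1 - a * p ^ (k+1)))"
  proof -
    have "A (Suc n) = 0" unfolding A_def by (simp add: qbinom_out)
    hence "(\<Sum>k\<in>{0..Suc n}. A k) = (\<Sum>k\<in>{0..n}. A k)" by (simp add: sum.atLeast0_atMost_Suc)
    also have "\<dots> = (\<Sum>k\<in>{0..n}. C k * (1 - a * p ^ (k+1)))"
    proof (intro sum.cong refl)
      fix k assume k: "k \<in> {0..n}"
      hence "Suc n - k = Suc (n - k)" by auto
      hence "qpoch (a * p ^ (k+1)) p (Suc n - k) = (1 - a * p ^ (k+1)) * qpoch (a * p * p ^ (k+1)) p (n - k)"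
        by (simp add: qpoch_Suc_front mult_ac)
      thus "A k = C k * (1 - a * p ^ (k+1))" unfolding A_def C_def by (simp add: power_mult_distrib mult_ac)
    qed
    finally show ?thesis .
  qed
  also have "(\<Sum>k\<in>{0..Suc n}. B k) = (\<Sum>k\<in>{0..n}. C k * (a * p ^ (k+1)))"
  proof -
    have "B 0 = 0" unfolding B_def by (simp add: qbinom_out)
    hence "(\<Sum>k\<in>{0..Suc n}. B k) = (\<Sum>k\<in>{0..n}. B (Suc k))" by (subst sum.atLeast0_atMost_Suc_shift) simp
    also have "\<dots> = (\<Sum>k\<in>{0..n}. C k * (a * p ^ (k+1)))"
    proof (intro sum.cong refl)
      fix k assume k: "k \<in> {0..n}"
      have e: "p ^ ((Suc k)^2) = p ^ (k^2) * p ^ k * p ^ (k+1)"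
        by (simp add: power2_eq_square power_add[symmetric] algebra_simps)
      have e2: "a * p ^ (Suc k + 1) = a * p * p ^ (k+1)" by (simp add: mult_ac)
      show "B (Suc k) = C k * (a * p ^ (k+1))" unfolding B_def C_def e e2
        by (simp add: power_mult_distrib mult_ac)
    qed
    finally show ?thesis .
  qed
  also have "(\<Sum>k\<in>{0..n}. C k * (1 - a * p ^ (k+1))) + (\<Sum>k\<in>{0..n}. C k * (a * p ^ (k+1))) = (\<Sum>k\<in>{0..n}. C k)"
    by (simp add: sum.distrib[symmetric] algebra_simps)
  also have "\<dots> = Tsum p n (a * p)" unfolding Tsum_def C_def by simp
  finally show ?thesis .
qed

lemma Tsum_one:
  assumes p: "norm p < 1"
  shows "Tsum p n a = 1"
proof (induction n arbitrary: a)
  case 0 thus ?case using qbinom_0[OF p, of 0] by (simp add: Tsum_def)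
next
  case (Suc n) thus ?case using Tsum_step[OF p] by simp
qed

lemma norm_pow_lt1: assumes p: "norm (p::complex) < 1" shows "norm (p ^ Suc k) < 1"
proof (cases "p = 0")
  case False
  have "norm (p ^ Suc k) = norm p ^ Suc k" by (rule norm_power)
  also have "\<dots> < 1" using p False by (intro power_Suc_less_one) auto
  finally show ?thesis .
qed simp

lemma keyK_nat:
  assumes p: "norm p < 1"
  shows "(\<Sum>k\<in>{0..n}. p ^ (k^2 + (2*r+1)*k) * inverse (qpoch p p (n - k)) * inverse (qpoch p p k) * inverse (qpoch p p (k + 2*r+1)))
       = inverse (qpoch p p n) * inverse (qpoch p p (n + 2*r+1))"
proof -
  define a where "a = p ^ (2*r+1)"
  define P where "P m = qpoch p p m" for m
  define Q where "Q m = qpoch (a * p) p m" for m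
  define R where "R k = qpoch (a * p ^ (k+1)) p (n - k)" for k
  have nrm: "norm (p ^ Suc m) < 1" for m using norm_pow_lt1[OF p] .
  have Pnz: "P m \<noteq> 0" for m unfolding P_def using p by (intro qpoch_nz) auto
  have ap: "a * p = p ^ Suc (2*r+1)" by (simp add: a_def mult.commute)
  have Qnz: "Q m \<noteq> 0" for m unfolding Q_def ap using p by (intro qpoch_nz[OF nrm]) auto
  have apk: "a * p ^ (k+1) = p ^ Suc (2*r+1+k)" for k by (simp add: a_def power_add)
  have Rnz: "R k \<noteq> 0" for k unfolding R_def apk using p by (intro qpoch_nz[OF nrm]) auto
  have PQ: "P (k + 2*r+1) = P (2*r+1) * Q k" for k
    using qpoch_add[of p p "2*r+1" k] unfolding P_def Q_def a_def by (simp add: add_ac mult.commute)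
  have QR: "k \<le> n \<Longrightarrow> Q n = Q k * R k" for k
    using qpoch_add[of "a*p" p k "n-k"] unfolding Q_def R_def by (simp add: mult_ac power_add)
  have trm: "p ^ (k^2 + (2*r+1)*k) * inverse (P (n - k)) * inverse (P k) * inverse (P (k + 2*r+1))
      = (qbinom p (int n) (int k) * a ^ k * p ^ (k^2) * R k) / (P n * Q n * P (2*r+1))" if k: "k \<le> n" for k
  proof -
    have qb: "qbinom p (int n) (int k) = P n / (P k * P (n - k))" using k unfolding P_def by (simp add: qbinom_nat)
    have ak: "a ^ k = p ^ ((2*r+1)*k)" unfolding a_def by (rule power_mult[symmetric])
    have pw: "p ^ (k^2 + (2*r+1)*k) = a ^ k * p ^ (k^2)" unfolding ak power_add by (rule mult.commute)
    show ?thesis unfolding qb pw PQ QR[OF k] using Pnz Qnz Rnz by (simp add: field_simps)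
  qed
  have "(\<Sum>k\<in>{0..n}. p ^ (k^2 + (2*r+1)*k) * inverse (qpoch p p (n - k)) * inverse (qpoch p p k) * inverse (qpoch p p (k + 2*r+1)))
     = (\<Sum>k\<in>{0..n}. (qbinom p (int n) (int k) * a ^ k * p ^ (k^2) * R k) / (P n * Q n * P (2*r+1)))"
    using trm unfolding P_def by (intro sum.cong refl) auto
  also have "\<dots> = Tsum p n a / (P n * Q n * P (2*r+1))"
    unfolding Tsum_def R_def sum_divide_distrib by simp
  also have "\<dots> = inverse (P n) * inverse (P (n + 2*r+1))"
    unfolding Tsum_one[OF p] using PQ[of n] Pnz Qnz by (simp add: field_simps add_ac)
  finally show ?thesis unfolding P_def .
qed

lemma inv_qfact_nat[simp]: "inv_qfact p (int m) = inverse (qpoch p p m)"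
  by (simp add: inv_qfact_def)

lemma inv_qfact_neg: "m < 0 \<Longrightarrow> inv_qfact p m = 0"
  by (simp add: inv_qfact_def)

lemma keyK_pos:
  assumes p: "norm p < 1"
  shows "(\<Sum>M\<in>{0..L}. p^(M^2+M) * inv_qfact p (int L - int M) * inv_qfact p (int M - int r) * inv_qfact p (int M + int r + 1))
     = p ^ (r^2 + r) * inv_qfact p (int L - int r) * inv_qfact p (int L + int r + 1)"
proof (cases "r \<le> L")
  case False
  thus ?thesis by (auto simp: inv_qfact_neg intro!: sum.neutral)
next
  case True
  define n where "n = L - r"
  define f where "f M = p^(M^2+M) * inv_qfact p (int L - int M) * inv_qfact p (int M - int r) * inv_qfact p (int M + int r + 1)" for M
  have "(\<Sum>M\<in>{0..L}. f M) = (\<Sum>M\<in>{r..L}. f M)"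
    by (rule sum.mono_neutral_right) (auto simp: f_def inv_qfact_neg)
  also have "\<dots> = (\<Sum>k\<in>{0..n}. f (k + r))"
    using sum.shift_bounds_cl_nat_ivl[of f 0 r n] True by (simp add: n_def)
  also have "\<dots> = (\<Sum>k\<in>{0..n}. p ^ (r^2 + r) * (p ^ (k^2 + (2*r+1)*k) * inverse (qpoch p p (n - k)) * inverse (qpoch p p k) * inverse (qpoch p p (k + 2*r+1))))"
  proof (intro sum.cong refl)
    fix k assume k: "k \<in> {0..n}"
    have e1: "int L - int (k + r) = int (n - k)" using k True by (simp add: n_def)
    have e2: "int (k + r) - int r = int k" by simp
    have e3: "int (k + r) + int r + 1 = int (k + 2*r+1)" by simp
    have e4: "(k + r)^2 + (k + r) = (r^2 + r) + (k^2 + (2*r+1)*k)" by (simp add: power2_eq_square algebra_simps)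
    show "f (k + r) = p ^ (r^2 + r) * (p ^ (k^2 + (2*r+1)*k) * inverse (qpoch p p (n - k)) * inverse (qpoch p p k) * inverse (qpoch p p (k + 2*r+1)))"
      unfolding f_def e1 e2 e3 e4 inv_qfact_nat power_add by (simp add: mult_ac)
  qed
  also have "\<dots> = p ^ (r^2 + r) * (inverse (qpoch p p n) * inverse (qpoch p p (n + 2*r+1)))"
    by (subst sum_distrib_left[symmetric], subst keyK_nat[OF p], rule refl)
  also have "\<dots> = p ^ (r^2 + r) * inv_qfact p (int L - int r) * inv_qfact p (int L + int r + 1)"
  proof -
    have f: "int L - int r = int n" "int L + int r + 1 = int (n + 2*r+1)" using True by (simp_all add: n_def)
    show ?thesis unfolding f inv_qfact_nat by (simp only: mult_ac)
  qed
  finally show ?thesis unfolding f_def .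
qed

lemma keyK:
  assumes p: "norm p < 1"
  shows "(\<Sum>M\<in>{0..L}. p^(M^2+M) * inv_qfact p (int L - int M) * inv_qfact p (int M - j) * inv_qfact p (int M + j + 1))
     = p ^ nat (j^2 + j) * inv_qfact p (int L - j) * inv_qfact p (int L + j + 1)"
proof (cases "j \<ge> 0")
  case True
  then obtain r where r: "j = int r" by (metis nonneg_eq_int)
  have "nat (j^2 + j) = r^2 + r" unfolding r by (simp add: nat_add_distrib nat_power_eq)
  thus ?thesis using keyK_pos[OF p, of L r] r by simp
next
  case False
  define r where "r = nat (- j - 1)"
  have r: "j = - int r - 1" using False by (simp add: r_def)
  have e0: "nat (j^2 + j) = r^2 + r"
  proof -
    have "j^2 + j = int (r^2 + r)" unfolding r by (simp add: power2_eq_square algebra_simps)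
    thus ?thesis by (metis nat_int)
  qed
  have e1: "int M - j = int M + int r + 1" "int M + j + 1 = int M - int r" for M by (simp_all add: r)
  have e2: "int L - j = int L + int r + 1" "int L + j + 1 = int L - int r" by (simp_all add: r)
  show ?thesis unfolding e0 e1 e2 using keyK_pos[OF p, of L r] by (simp add: mult_ac)
qed

definition Rs :: "complex \<Rightarrow> (int \<Rightarrow> complex) \<Rightarrow> nat \<Rightarrow> complex" where
  "Rs p c L = (\<Sum>j\<in>{- int L - 1..int L}. c j * inv_qfact p (int L - j) * inv_qfact p (int L + j + 1))"

definition Bop :: "complex \<Rightarrow> (nat \<Rightarrow> complex) \<Rightarrow> nat \<Rightarrow> complex" where
  "Bop p g L = (\<Sum>M\<in>{0..L}. p^(M^2+M) * inv_qfact p (int L - int M) * g M)"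

lemma Rs_ext:
  assumes "L \<le> K"
  shows "Rs p c L = (\<Sum>j\<in>{- int K - 1..int K}. c j * inv_qfact p (int L - j) * inv_qfact p (int L + j + 1))"
  unfolding Rs_def using assms
  by (intro sum.mono_neutral_left) (auto simp: inv_qfact_neg)

lemma bailey:
  assumes p: "norm p < 1"
  shows "Bop p (Rs p c) L = Rs p (\<lambda>j. p ^ nat (j^2 + j) * c j) L"
proof -
  have "Bop p (Rs p c) L = (\<Sum>M\<in>{0..L}. p^(M^2+M) * inv_qfact p (int L - int M) *
      (\<Sum>j\<in>{- int L - 1..int L}. c j * inv_qfact p (int M - j) * inv_qfact p (int M + j + 1)))"
    unfolding Bop_def by (intro sum.cong refl) (simp add: Rs_ext)
  also have "\<dots> = (\<Sum>j\<in>{- int L - 1..int L}. c j * (\<Sum>M\<in>{0..L}. p^(M^2+M) * inv_qfact p (int L - int M) * inv_qfact p (int M - j) * inv_qfact p (int M + j + 1)))"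
    unfolding sum_distrib_left by (subst sum.swap, intro sum.cong refl) (simp add: mult_ac)
  also have "\<dots> = Rs p (\<lambda>j. p ^ nat (j^2 + j) * c j) L"
    unfolding Rs_def keyK[OF p] by (simp add: mult_ac)
  finally show ?thesis .
qed

lemma bailey_iter:
  assumes p: "norm p < 1"
  shows "(Bop p ^^ v) (Rs p c) = Rs p (\<lambda>j. p ^ (v * nat (j^2 + j)) * c j)"
proof (induction v)
  case 0 show ?case by simp
next
  case (Suc v)
  have "(Bop p ^^ Suc v) (Rs p c) = Bop p (Rs p (\<lambda>j. p ^ (v * nat (j^2 + j)) * c j))" using Suc by simp
  also have "\<dots> = Rs p (\<lambda>j. p ^ nat (j^2 + j) * (p ^ (v * nat (j^2 + j)) * c j))"
    by (rule ext) (rule bailey[OF p])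
  also have "(\<lambda>j. p ^ nat (j^2 + j) * (p ^ (v * nat (j^2 + j)) * c j)) = (\<lambda>j. p ^ (Suc v * nat (j^2 + j)) * c j)"
    by (simp add: power_add mult_ac)
  finally show ?case .
qed

definition beta0 :: "complex \<Rightarrow> nat \<Rightarrow> complex" where
  "beta0 q m = (q^2) ^ m * (qpoch (q ^ 3) (q ^ 6) m / qpoch q (q ^ 2) m) / qpoch (q^2) (q^2) (2 * m + 1)"

definition c0 :: "complex \<Rightarrow> int \<Rightarrow> complex" where
  "c0 q j = (-1) powi j * of_int (chi j) * q powi (j^2 - 1)"

lemma ratio_prod:
  assumes q: "norm q < 1"
  shows "qpoch (q ^ 3) (q ^ 6) L / qpoch q (q ^ 2) L = (\<Prod>k<L. 1 + q^(2*k+1) + (q^(2*k+1))^2)"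
proof -
  have nz: "qpoch q (q^2) L \<noteq> 0" using q by (intro qpoch_nz) (auto simp: norm_power power_le_one)
  have "qpoch (q ^ 3) (q ^ 6) L = qpoch q (q^2) L * (\<Prod>k<L. 1 + q^(2*k+1) + (q^(2*k+1))^2)"
    unfolding qpoch_def prod.distrib[symmetric]
  proof (intro prod.cong refl)
    fix k
    have x3: "1 - x^3 = (1 - x) * (1 + x + x^2)" for x :: complex
      by (simp add: algebra_simps power2_eq_square power3_eq_cube)
    have a1: "q ^ 3 * (q ^ 6) ^ k = q ^ (3 + 6 * k)" by (simp add: power_add power_mult)
    have a2: "(q^(2*k+1))^3 = q ^ ((2*k+1)*3)" by (rule power_mult[symmetric])
    have a3: "(2*k+1)*3 = 3 + 6 * k" by simp
    have e1: "q ^ 3 * (q ^ 6) ^ k = (q^(2*k+1))^3" unfolding a1 a2 a3 ..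
    have e2: "q * (q^2)^k = q^(2*k+1)" by (simp add: power_mult[symmetric] power_add[symmetric] mult.commute)
    show "1 - q ^ 3 * (q ^ 6) ^ k = (1 - q * (q^2) ^ k) * (1 + q^(2*k+1) + (q^(2*k+1))^2)"
      unfolding e1 e2 by (rule x3)
  qed
  thus ?thesis using nz by simp
qed

lemma qbinom_inv:
  assumes p: "norm p < 1" and j: "j \<in> {- int L - 1..int L}"
  shows "qbinom p (2 * int L + 1) (int L - j) = qpoch p p (2*L+1) * inv_qfact p (int L - j) * inv_qfact p (int L + j + 1)"
proof -
  have a: "nat (2 * int L + 1) = 2*L+1" by simp
  have b: "2 * int L + 1 - (int L - j) = int L + j + 1" by simp
  show ?thesis using j unfolding qbinom_def inv_qfact_def a b by (simp add: divide_inverse)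
qed

lemma base_pair_q:
  assumes q: "norm q < 1"
  shows "q * (qpoch (q^2) (q^2) (2*L+1) * Rs (q^2) (c0 q) L) = q * (qpoch (q^2) (q^2) (2*L+1) * beta0 q L)"
proof -
  have p: "norm (q^2) < 1" by (rule norm_q2[OF q])
  have Pnz: "qpoch (q^2) (q^2) (2*L+1) \<noteq> 0" using p by (intro qpoch_nz) auto
  have "q * (qpoch (q^2) (q^2) (2*L+1) * Rs (q^2) (c0 q) L) =
     (\<Sum>j\<in>{- int L - 1..int L}. (-1) powi j * of_int (chi j) * q ^ nat (j^2) * qbinom (q^2) (2 * int L + 1) (int L - j))"
    unfolding Rs_def sum_distrib_left
  proof (intro sum.cong refl)
    fix j assume j: "j \<in> {- int L - 1..int L}"
    have cq: "q * c0 q j = (-1) powi j * of_int (chi j) * q ^ nat (j^2)"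
    proof (cases "j = 0")
      case True thus ?thesis by (simp add: c0_def chi_def)
    next
      case False
      hence "j^2 > 0" by simp
      hence "j^2 \<ge> 1" by linarith
      have nn: "j^2 - 1 \<ge> 0" using \<open>j^2 \<ge> 1\<close> by linarith
      have "q powi (j^2 - 1) = q ^ nat (j^2 - 1)" unfolding power_int_def if_P[OF nn] ..
      moreover have "nat (j^2 - 1) = nat (j^2) - 1" using \<open>j^2 \<ge> 1\<close> by linarith
      ultimately have "q powi (j^2 - 1) = q ^ (nat (j^2) - 1)" by simp
      moreover have "q * q ^ (nat (j^2) - 1) = q ^ nat (j^2)"
      proof -
        have "nat (j^2) = Suc (nat (j^2) - 1)" using \<open>j^2 \<ge> 1\<close> by simp
        hence "q ^ nat (j^2) = q ^ Suc (nat (j^2) - 1)" by simp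
        thus ?thesis by simp
      qed
      ultimately show ?thesis by (simp add: c0_def mult_ac)
    qed
    show "q * (qpoch (q^2) (q^2) (2*L+1) * (c0 q j * inv_qfact (q^2) (int L - j) * inv_qfact (q^2) (int L + j + 1))) =
        (-1) powi j * of_int (chi j) * q ^ nat (j^2) * qbinom (q^2) (2 * int L + 1) (int L - j)"
      unfolding qbinom_inv[OF p j] cq[symmetric] by (simp add: mult_ac)
  qed
  also have "\<dots> = q^(2*L+1) * (\<Prod>k<L. 1 + q^(2*k+1) + (q^(2*k+1))^2)" by (rule base_id[OF q])
  also have "\<dots> = q * (qpoch (q^2) (q^2) (2*L+1) * beta0 q L)"
    unfolding beta0_def ratio_prod[OF q] using Pnz by (simp add: power_mult[symmetric] mult_ac)
  finally show ?thesis .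
qed

lemma qpoch_zero: "qpoch 0 b n = 1" by (simp add: qpoch_def)

lemma base_pair0: "Rs 0 (c0 0) L = beta0 0 L"
proof -
  have t: "c0 0 j * inv_qfact 0 (int L - j) * inv_qfact 0 (int L + j + 1) =
      (if j = -1 then 1 else 0) + (if j = 1 then -1 else 0)" if j: "j \<in> {- int L - 1..int L}" for j
  proof -
    have iq: "inv_qfact 0 m = (if m < 0 then 0 else 1)" for m by (simp add: inv_qfact_def qpoch_zero)
    have "j^2 - 1 = 0 \<longleftrightarrow> j = 1 \<or> j = -1"
    proof -
      have "j^2 - 1 = (j - 1) * (j + 1)" by (simp add: power2_eq_square algebra_simps)
      thus ?thesis by auto
    qed
    moreover have "chi 1 = 1" "chi (-1) = -1" by (simp_all add: chi_def)
    ultimately show ?thesis using j unfolding c0_def iq by (auto simp: power_int_0_left_if)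
  qed
  have "Rs 0 (c0 0) L = (\<Sum>j\<in>{- int L - 1..int L}. (if j = -1 then 1 else 0) + (if j = 1 then -1 else 0))"
    unfolding Rs_def using t by (intro sum.cong) auto
  also have "\<dots> = 1 + (if L \<ge> 1 then -1 else 0)"
    by (simp add: sum.distrib)
  also have "\<dots> = beta0 0 L"
    by (cases L) (simp_all add: beta0_def qpoch_zero)
  finally show ?thesis .
qed

lemma base_pair:
  assumes q: "norm q < 1"
  shows "Rs (q^2) (c0 q) L = beta0 q L"
proof (cases "q = 0")
  case True thus ?thesis using base_pair0 by simp
next
  case False
  have p: "norm (q^2) < 1" by (rule norm_q2[OF q])
  have Pnz: "qpoch (q^2) (q^2) (2*L+1) \<noteq> 0" using p by (intro qpoch_nz) auto
  show ?thesis using base_pair_q[OF q, of L] False Pnz by simp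
qed

definition Box :: "nat \<Rightarrow> nat \<Rightarrow> (nat \<Rightarrow> nat) set" where
  "Box v K = {n. (\<forall>i. i \<notin> {1..v} \<longrightarrow> n i = 0) \<and> (\<forall>i. n i \<le> K)}"

definition Nf :: "(nat \<Rightarrow> nat) \<Rightarrow> nat \<Rightarrow> nat \<Rightarrow> nat" where
  "Nf n v i = (\<Sum>k = i..v. n k)"

definition G :: "complex \<Rightarrow> nat \<Rightarrow> (nat \<Rightarrow> complex) \<Rightarrow> (nat \<Rightarrow> nat) \<Rightarrow> nat \<Rightarrow> complex" where
  "G p v g n L = p ^ (\<Sum>i = 1..v. Nf n v i * (Nf n v i + 1)) * (\<Prod>i = 1..v - 1. inverse (qpoch p p (n i)))
      * g (n v) * inv_qfact p (int L - int (Nf n v 1))"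

definition cons :: "nat \<Rightarrow> (nat \<Rightarrow> nat) \<Rightarrow> nat \<Rightarrow> nat" where
  "cons m n' i = (if i = 0 then 0 else if i = 1 then m else n' (i - 1))"

definition sh :: "(nat \<Rightarrow> nat) \<Rightarrow> nat \<Rightarrow> nat" where
  "sh n i = (if i = 0 then 0 else n (Suc i))"

lemma finite_Box: "finite (Box v K)"
proof -
  have "Box v K \<subseteq> {f. \<forall>x. (x \<in> {1..v} \<longrightarrow> f x \<in> {0..K}) \<and> (x \<notin> {1..v} \<longrightarrow> f x = 0)}"
    unfolding Box_def by auto
  thus ?thesis by (rule finite_subset) (intro finite_set_of_finite_funs; simp)
qed

lemma Nf_cons_1: "Nf (cons m n') (Suc v) 1 = m + Nf n' v 1"
proof -
  have "Nf (cons m n') (Suc v) 1 = cons m n' 1 + (\<Sum>k = Suc 1..Suc v. cons m n' k)"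
    unfolding Nf_def by (subst sum.atLeast_Suc_atMost) auto
  also have "(\<Sum>k = Suc 1..Suc v. cons m n' k) = (\<Sum>k = 1..v. cons m n' (Suc k))"
    by (rule sum.shift_bounds_cl_Suc_ivl)
  finally show ?thesis by (simp add: Nf_def cons_def)
qed

lemma Nf_cons_Suc: "Nf (cons m n') (Suc v) (Suc i) = Nf n' v i" if "i \<ge> 1"
proof -
  have "Nf (cons m n') (Suc v) (Suc i) = (\<Sum>k = i..v. cons m n' (Suc k))"
    unfolding Nf_def by (rule sum.shift_bounds_cl_Suc_ivl)
  also have "\<dots> = Nf n' v i" unfolding Nf_def cons_def using that by (intro sum.cong) auto
  finally show ?thesis .
qed

lemma G_cons:
  assumes v: "v \<ge> 1"
  shows "G p (Suc v) g (cons m n') L =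
    p ^ ((m + Nf n' v 1)^2 + (m + Nf n' v 1)) * inv_qfact p (int L - int (m + Nf n' v 1)) * G p v g n' (m + Nf n' v 1)"
proof -
  define N where "N = m + Nf n' v 1"
  have eN: "Nf (cons m n') (Suc v) 1 = N" unfolding N_def by (rule Nf_cons_1)
  have s1: "(\<Sum>i = 1..Suc v. Nf (cons m n') (Suc v) i * (Nf (cons m n') (Suc v) i + 1))
      = N * (N + 1) + (\<Sum>i = 1..v. Nf n' v i * (Nf n' v i + 1))"
  proof -
    have "(\<Sum>i = 1..Suc v. Nf (cons m n') (Suc v) i * (Nf (cons m n') (Suc v) i + 1))
        = Nf (cons m n') (Suc v) 1 * (Nf (cons m n') (Suc v) 1 + 1) + (\<Sum>i = Suc 1..Suc v. Nf (cons m n') (Suc v) i * (Nf (cons m n') (Suc v) i + 1))"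
      by (subst sum.atLeast_Suc_atMost) auto
    also have "(\<Sum>i = Suc 1..Suc v. Nf (cons m n') (Suc v) i * (Nf (cons m n') (Suc v) i + 1))
        = (\<Sum>i = 1..v. Nf (cons m n') (Suc v) (Suc i) * (Nf (cons m n') (Suc v) (Suc i) + 1))"
      by (rule sum.shift_bounds_cl_Suc_ivl)
    also have "\<dots> = (\<Sum>i = 1..v. Nf n' v i * (Nf n' v i + 1))"
      by (intro sum.cong refl) (simp add: Nf_cons_Suc)
    finally show ?thesis unfolding eN .
  qed
  have s2: "(\<Prod>i = 1..Suc v - 1. inverse (qpoch p p (cons m n' i)))
      = inverse (qpoch p p m) * (\<Prod>i = 1..v - 1. inverse (qpoch p p (n' i)))"
  proof -
    have "(\<Prod>i = 1..v. inverse (qpoch p p (cons m n' i))) = inverse (qpoch p p (cons m n' 1)) * (\<Prod>i = Suc 1..Suc (v - 1). inverse (qpoch p p (cons m n' i)))"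
      using v by (subst prod.atLeast_Suc_atMost) auto
    also have "(\<Prod>i = Suc 1..Suc (v - 1). inverse (qpoch p p (cons m n' i))) = (\<Prod>i = 1..v - 1. inverse (qpoch p p (cons m n' (Suc i))))"
      by (rule prod.shift_bounds_cl_Suc_ivl)
    finally show ?thesis by (simp add: cons_def)
  qed
  have s3: "cons m n' (Suc v) = n' v" using v by (simp add: cons_def)
  have s4: "int N - int (Nf n' v 1) = int m" by (simp add: N_def)
  show ?thesis
    unfolding G_def s1 s2 s3 Nf_cons_1 N_def[symmetric] s4 inv_qfact_nat
    by (simp add: power_add power2_eq_square algebra_simps)
qed

lemma cons_sh: "n \<in> Box (Suc w) K \<Longrightarrow> cons (n 1) (sh n) = n"
  unfolding Box_def cons_def sh_def by (rule ext) (auto simp: Suc_pred)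

lemma sh_Box: "n \<in> Box (Suc w) K \<Longrightarrow> sh n \<in> Box w K"
  unfolding Box_def sh_def by auto

lemma cons_Box: assumes "m \<le> K" "n' \<in> Box w K" shows "cons m n' \<in> Box (Suc w) K"
proof -
  have z: "n' k = 0" if "k \<notin> {1..w}" for k using assms(2) that unfolding Box_def by auto
  have b: "n' k \<le> K" for k using assms(2) unfolding Box_def by auto
  show ?thesis unfolding Box_def cons_def using assms(1) b by (auto intro!: z)
qed

lemma sh_cons: "n' \<in> Box w K \<Longrightarrow> sh (cons m n') = n'"
  unfolding Box_def cons_def sh_def by (rule ext) auto

lemma Box_le: "n \<in> Box v K \<Longrightarrow> n 1 \<le> K"
  unfolding Box_def by auto

lemma sum_Box_split:
  "(\<Sum>n\<in>Box (Suc w) K. F n) = (\<Sum>n'\<in>Box w K. \<Sum>m\<in>{0..K}. F (cons m n'))"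
proof -
  have "(\<Sum>n\<in>Box (Suc w) K. F n) = (\<Sum>x\<in>{0..K} \<times> Box w K. F (cons (fst x) (snd x)))"
  proof (rule sum.reindex_bij_witness[where i="\<lambda>x. cons (fst x) (snd x)" and j="\<lambda>n. (n 1, sh n)"])
    fix a assume a: "a \<in> Box (Suc w) K"
    show "cons (fst (a 1, sh a)) (snd (a 1, sh a)) = a" using cons_sh[OF a] by simp
    show "(a 1, sh a) \<in> {0..K} \<times> Box w K" using sh_Box[OF a] Box_le[OF a] by simp
    show "F (cons (fst (a 1, sh a)) (snd (a 1, sh a))) = F a" using cons_sh[OF a] by simp
  next
    fix b assume b: "b \<in> {0..K} \<times> Box w K"
    then obtain m n' where mn: "b = (m, n')" "m \<le> K" "n' \<in> Box w K" by auto
    show "(cons (fst b) (snd b) 1, sh (cons (fst b) (snd b))) = b"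
      using mn sh_cons[OF mn(3)] by (simp add: cons_def)
    show "cons (fst b) (snd b) \<in> Box (Suc w) K" using mn cons_Box by simp
  qed
  also have "\<dots> = (\<Sum>m\<in>{0..K}. \<Sum>n'\<in>Box w K. F (cons m n'))"
    by (simp add: sum.cartesian_product split_beta)
  also have "\<dots> = (\<Sum>n'\<in>Box w K. \<Sum>m\<in>{0..K}. F (cons m n'))"
    by (rule sum.swap)
  finally show ?thesis .
qed

lemma sum_Box1:
  "(\<Sum>n\<in>Box 1 K. F (n 1)) = (\<Sum>m\<in>{0..K}. F m)"
  by (rule sum.reindex_bij_witness[where i="\<lambda>m k. if k = 1 then m else 0" and j="\<lambda>n. n 1"])
     (auto simp: Box_def fun_eq_iff)

lemma shift_zero:
  fixes h :: "nat \<Rightarrow> complex"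
  assumes "L \<le> K" "\<And>M. M > L \<Longrightarrow> h M = 0" "\<And>M. M < c \<Longrightarrow> h M = 0"
  shows "(\<Sum>m\<in>{0..K}. h (m + c)) = (\<Sum>M\<in>{0..L}. h M)"
proof -
  have "(\<Sum>m\<in>{0..K}. h (m + c)) = (\<Sum>M\<in>{0+c..K+c}. h M)"
    by (rule sum.shift_bounds_cl_nat_ivl[symmetric])
  also have "\<dots> = (\<Sum>M\<in>{0..K+c}. h M)"
    by (rule sum.mono_neutral_left) (auto intro: assms(3))
  also have "\<dots> = (\<Sum>M\<in>{0..L}. h M)"
    using assms(1) by (intro sum.mono_neutral_right) (auto intro: assms(2))
  finally show ?thesis .
qed

lemma G1: "G p (Suc 0) g n L = p ^ ((n 1)^2 + n 1) * inv_qfact p (int L - int (n 1)) * g (n 1)"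
proof -
  have a: "{1..Suc 0} = {1}" by auto
  show ?thesis unfolding G_def Nf_def a by (simp add: power2_eq_square algebra_simps)
qed

lemma box_sum:
  assumes "L \<le> K"
  shows "(\<Sum>n\<in>Box (Suc w) K. G p (Suc w) g n L) = (Bop p ^^ Suc w) g L"
  using assms
proof (induction w arbitrary: L)
  case 0
  have "(\<Sum>n\<in>Box (Suc 0) K. G p (Suc 0) g n L) = (\<Sum>n\<in>Box 1 K. (\<lambda>m. p ^ (m^2 + m) * inv_qfact p (int L - int m) * g m) (n 1))"
    by (simp add: G1)
  also have "\<dots> = (\<Sum>m\<in>{0..K}. p ^ (m^2 + m) * inv_qfact p (int L - int m) * g m)"
    by (rule sum_Box1)
  also have "\<dots> = Bop p g L"
    unfolding Bop_def using 0 by (intro sum.mono_neutral_right) (auto simp: inv_qfact_neg)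
  finally show ?case by simp
next
  case (Suc w)
  define h where "h n' M = p ^ (M^2 + M) * inv_qfact p (int L - int M) * G p (Suc w) g n' M" for n' M
  have "(\<Sum>n\<in>Box (Suc (Suc w)) K. G p (Suc (Suc w)) g n L) = (\<Sum>n'\<in>Box (Suc w) K. \<Sum>m\<in>{0..K}. G p (Suc (Suc w)) g (cons m n') L)"
    by (rule sum_Box_split)
  also have "\<dots> = (\<Sum>n'\<in>Box (Suc w) K. \<Sum>m\<in>{0..K}. h n' (m + Nf n' (Suc w) 1))"
    unfolding h_def by (intro sum.cong refl) (simp add: G_cons add.commute)
  also have "\<dots> = (\<Sum>n'\<in>Box (Suc w) K. \<Sum>M\<in>{0..L}. h n' M)"
  proof (rule sum.cong[OF refl])
    fix n' assume "n' \<in> Box (Suc w) K"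
    show "(\<Sum>m\<in>{0..K}. h n' (m + Nf n' (Suc w) 1)) = (\<Sum>M\<in>{0..L}. h n' M)"
      by (rule shift_zero[OF Suc.prems]) (simp_all add: h_def G_def inv_qfact_neg)
  qed
  also have "\<dots> = (\<Sum>M\<in>{0..L}. p ^ (M^2 + M) * inv_qfact p (int L - int M) * (\<Sum>n'\<in>Box (Suc w) K. G p (Suc w) g n' M))"
    unfolding h_def sum_distrib_left by (rule sum.swap)
  also have "\<dots> = (\<Sum>M\<in>{0..L}. p ^ (M^2 + M) * inv_qfact p (int L - int M) * (Bop p ^^ Suc w) g M)"
    using Suc.prems by (intro sum.cong refl) (simp add: Suc.IH)
  also have "\<dots> = (Bop p ^^ Suc (Suc w)) g L" by (simp add: Bop_def)
  finally show ?case .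
qed

lemma coef:
  "(-1) powi j * q powi ((2 * int v + 1) * j ^ 2 + 2 * int v * j - 1) * of_int (Legendre j 3)
   = (q^2) ^ (v * nat (j^2 + j)) * c0 q j"
proof (cases "j = 0")
  case True thus ?thesis by (simp add: Legendre3 c0_def chi_def)
next
  case False
  hence "j^2 > 0" by simp
  hence j1: "j^2 \<ge> 1" by linarith
  have jj: "j^2 + j \<ge> 0"
  proof -
    have "j^2 + j = j * (j + 1)" by (simp add: power2_eq_square algebra_simps)
    also have "\<dots> \<ge> 0" by (cases "j \<ge> 0") (auto simp: mult_nonneg_nonneg mult_nonpos_nonpos)
    finally show ?thesis .
  qed
  have nn1: "j^2 - 1 \<ge> 0" using j1 by linarith
  define m where "m = nat (j^2 + j)"
  have jm: "j^2 + j = int m" using jj unfolding m_def by simp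
  have e: "(2 * int v + 1) * j ^ 2 + 2 * int v * j - 1 = (j^2 - 1) + int (2 * v * m)"
  proof -
    have "(2 * int v + 1) * j ^ 2 + 2 * int v * j - 1 = (j^2 - 1) + 2 * int v * (j^2 + j)"
      by (simp add: algebra_simps)
    thus ?thesis unfolding jm by simp
  qed
  have nn2: "(j^2 - 1) + int (2 * v * m) \<ge> 0" using nn1 by simp
  have e2: "nat ((j^2 - 1) + int (2 * v * m)) = nat (j^2 - 1) + 2 * v * m"
    using nn1 by (subst nat_add_distrib) (simp_all only: nat_int)
  have "q powi ((2 * int v + 1) * j ^ 2 + 2 * int v * j - 1) = q ^ (nat (j^2 - 1) + 2 * v * m)"
    unfolding e power_int_def if_P[OF nn2] e2 ..
  moreover have "q powi (j^2 - 1) = q ^ nat (j^2 - 1)" unfolding power_int_def if_P[OF nn1] ..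
  moreover have "(q^2) ^ (v * nat (j^2 + j)) = q ^ (2 * v * m)" unfolding m_def by (simp add: power_mult mult.assoc)
  ultimately show ?thesis unfolding c0_def Legendre3 by (simp add: power_add mult_ac)
qed

theorem mainTheorem17:
  fixes q :: complex and v L :: nat
  assumes "norm q < 1" and "v \<ge> 1"
  shows "(\<Sum>\<^sub>\<infinity> n \<in> {n :: nat \<Rightarrow> nat. \<forall>i. i \<notin> {1..v} \<longrightarrow> n i = 0}.
      let tq = q ^ 2; N = (\<lambda>i. \<Sum>k = i..v. n k) in
        tq ^ ((\<Sum>i = 1..v. N i * (N i + 1)) + n v)
        * (\<Prod>i = 1..v - 1. inverse (qpoch tq tq (n i)))
        / qpoch tq tq (2 * n v + 1)
        * (qpoch (q ^ 3) (q ^ 6) (n v) / qpoch q (q ^ 2) (n v))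
        * (qpoch tq tq (2 * L + 1) * inv_qfact tq (int L - int (N 1))))
    = (\<Sum>\<^sub>\<infinity> j :: int.
        (-1) powi j * q powi ((2 * int v + 1) * j ^ 2 + 2 * int v * j - 1)
        * of_int (Legendre j 3) * qbinom (q ^ 2) (2 * int L + 1) (int L - j))"
  (is "infsum ?F ?A = infsum ?H UNIV")
proof -
  note q = assms(1)
  have p: "norm (q^2) < 1" by (rule norm_q2[OF q])
  obtain w where w: "v = Suc w" using assms(2) by (cases v) auto
  define PL where "PL = qpoch (q^2) (q^2) (2 * L + 1)"
  have F: "?F n = PL * G (q^2) v (beta0 q) n L" for n
    unfolding G_def Nf_def beta0_def Let_def PL_def by (simp add: power_add divide_inverse mult_ac)
  have sub: "Box v L \<subseteq> ?A" unfolding Box_def by auto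
  have "infsum ?F ?A = infsum ?F (Box v L)"
  proof (rule infsum_cong_neutral)
    fix x assume x: "x \<in> ?A - Box v L"
    then obtain i where i: "x i > L" unfolding Box_def by (auto simp: not_le)
    have "i \<in> {1..v}" using x i by (auto)
    hence "x i \<le> Nf x v 1" unfolding Nf_def by (intro member_le_sum) auto
    hence "inv_qfact (q^2) (int L - int (Nf x v 1)) = 0" using i by (simp add: inv_qfact_neg)
    thus "?F x = 0" unfolding F G_def by simp
  qed (use sub in auto)
  also have "\<dots> = (\<Sum>n\<in>Box v L. ?F n)" by (simp add: finite_Box)
  also have "\<dots> = PL * (\<Sum>n\<in>Box v L. G (q^2) v (beta0 q) n L)" unfolding F by (simp add: sum_distrib_left)
  also have "(\<Sum>n\<in>Box v L. G (q^2) v (beta0 q) n L) = (Bop (q^2) ^^ v) (beta0 q) L"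
    unfolding w by (rule box_sum) simp
  also have "beta0 q = Rs (q^2) (c0 q)" by (rule ext) (simp add: base_pair[OF q])
  also have "(Bop (q^2) ^^ v) (Rs (q^2) (c0 q)) = Rs (q^2) (\<lambda>j. (q^2) ^ (v * nat (j^2 + j)) * c0 q j)"
    by (rule bailey_iter[OF p])
  also have "PL * Rs (q^2) (\<lambda>j. (q^2) ^ (v * nat (j^2 + j)) * c0 q j) L = (\<Sum>j\<in>{- int L - 1..int L}. ?H j)"
    unfolding Rs_def sum_distrib_left
  proof (rule sum.cong[OF refl])
    fix j assume j: "j \<in> {- int L - 1..int L}"
    show "PL * ((q^2) ^ (v * nat (j^2 + j)) * c0 q j * inv_qfact (q^2) (int L - j) * inv_qfact (q^2) (int L + j + 1)) = ?H j"
      unfolding qbinom_inv[OF p j] coef PL_def by (simp add: mult_ac)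
  qed
  also have "\<dots> = infsum ?H {- int L - 1..int L}" by simp
  also have "\<dots> = infsum ?H UNIV"
    by (rule infsum_cong_neutral) (auto simp: qbinom_out)
  finally show ?thesis .
qed

end
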